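(* Let $Q_1=\{q_1<q_2<q_3<\cdots\}$ and $Q_2=\{v_1<v_2<v_3<\cdots\}$ be sets of prime powers (greater than 1), the elements within each set being pairwise coprime. Let $S_1$ be the set of integers $q_1^{e_1}\cdots q_s^{e_s}$ with $s\ge0$, $q_i\in Q_1$, $e_i\in\mathbb Z_{\ge0}$, and $S_2$ likewise with $Q_2$. Let $\pi_i(x)=\#\{q\in Q_i:q\le x\}$. Let $h:\mathbb N\to\mathbb R_{\ge0}$ be non-increasing and put $V_i(x)=\sum_{n\in S_i,\ n\le x}h(n)$ for $i=1,2$. Then: (a) if $\pi_1(x)\ge\pi_2(x)$ for all $x\ge0$, then $V_1(x)\ge V_2(x)$ for all $x\ge0$; (b) if $x_0$ is a real number and $\pi_1(x)\ge\pi_2(x)$ for all $x\le x_0$, then $V_1(x)\ge V_2(x)$ for all $x\le x_0$. *)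

theory Defs
  imports Complex_Main "HOL-Number_Theory.Prime_Powers" "HOL-Library.Multiset"
begin

definition gen_set :: "nat set \<Rightarrow> nat set" where
  "gen_set Q = {prod_mset M | M. set_mset M \<subseteq> Q}"

definition count_upto :: "nat set \<Rightarrow> real \<Rightarrow> nat" where
  "count_upto Q x = card {q \<in> Q. real q \<le> x}"

definition Vsum :: "(nat \<Rightarrow> real) \<Rightarrow> nat set \<Rightarrow> real \<Rightarrow> real" where
  "Vsum h S x = (\<Sum>n \<in> {n \<in> S. real n \<le> x}. h n)"

end

theory Submission
  imports Defs
begin

lemma mult_prod_aux:
  fixes M :: "nat multiset"
  assumes "set_mset M \<subseteq> Q" "\<forall>r\<in>Q. r > 0" "prime p" "k > 0"
    and "\<forall>r\<in>Q. r \<noteq> p ^ k \<longrightarrow> \<not> p dvd r"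
  shows "multiplicity p (prod_mset M) = count M (p ^ k) * k"
  using assms(1)
proof (induction M)
  case empty
  then show ?case by simp
next
  case (add r M)
  have r: "r \<in> Q" "r > 0" using add.prems assms(2) by auto
  have pM: "prod_mset M \<noteq> 0" using add.prems assms(2) by (auto simp: prod_mset_zero_iff)
  have "multiplicity p (prod_mset (add_mset r M)) = multiplicity p r + multiplicity p (prod_mset M)"
    using pM r assms(3) by (simp add: prime_elem_multiplicity_mult_distrib)
  moreover have "multiplicity p r = (if r = p ^ k then k else 0)"
  proof (cases "r = p ^ k")
    case True
    then show ?thesis using assms(3) by (simp add: multiplicity_same_power)
  next
    case False
    then show ?thesis using assms(5) r by (simp add: not_dvd_imp_multiplicity_0)
  qed
  ultimately show ?case using add by auto
qed

lemma unique_fact: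
  fixes M N :: "nat multiset"
  assumes pp: "\<forall>q\<in>Q. primepow q"
    and cop: "\<forall>a\<in>Q. \<forall>b\<in>Q. a \<noteq> b \<longrightarrow> coprime a b"
    and M: "set_mset M \<subseteq> Q" and N: "set_mset N \<subseteq> Q"
    and eq: "prod_mset M = prod_mset N"
  shows "M = N"
proof (rule multiset_eqI)
  fix q
  show "count M q = count N q"
  proof (cases "q \<in> Q")
    case False
    then show ?thesis using M N by (metis count_eq_zero_iff subsetD)
  next
    case True
    then obtain p k where pk: "prime p" "k > 0" "q = p ^ k" using pp primepow_def by blast
    have pos: "\<forall>r\<in>Q. r > 0" using pp primepow_gt_Suc_0 by force
    have nd: "\<forall>r\<in>Q. r \<noteq> p ^ k \<longrightarrow> \<not> p dvd r"
    proof (intro ballI impI notI)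
      fix r assume r: "r \<in> Q" "r \<noteq> p ^ k" "p dvd r"
      have "coprime r q" using cop r(1,2) True pk(3) by blast
      moreover have "p dvd q" using pk by simp
      ultimately show False using r pk
        by (meson coprime_common_divisor not_prime_unit)
    qed
    have "count M q * k = count N q * k"
      using mult_prod_aux[OF M pos pk(1,2) nd] mult_prod_aux[OF N pos pk(1,2) nd] eq pk by simp
    then show ?thesis using pk by simp
  qed
qed

lemma prod_image_le:
  fixes M :: "nat multiset"
  assumes "\<forall>v\<in>#M. f v \<le> v"
  shows "prod_mset (image_mset f M) \<le> prod_mset M"
  using assms by (induction M) (auto intro: mult_le_mono)

lemma match_lemma:
  fixes A B :: "nat set"
  shows "finite A \<Longrightarrow> finite B \<Longrightarrow> (\<forall>y. card {a\<in>A. a \<le> y} \<le> card {b\<in>B. b \<le> y}) \<Longrightarrow>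
    \<exists>\<psi>. inj_on \<psi> A \<and> \<psi> ` A \<subseteq> B \<and> (\<forall>a\<in>A. \<psi> a \<le> a)"
proof (induction "card A" arbitrary: A B)
  case 0
  then show ?case by auto
next
  case (Suc n)
  define a0 where "a0 = Min A"
  have Ane: "A \<noteq> {}" using Suc.hyps(2) by auto
  have a0A: "a0 \<in> A" using Suc.prems Ane a0_def by auto
  have a0min: "\<forall>a\<in>A. a0 \<le> a" using Suc.prems a0_def by auto
  have "card {a\<in>A. a \<le> a0} \<ge> 1"
  proof -
    have "a0 \<in> {a\<in>A. a \<le> a0}" using a0A by auto
    moreover have "finite {a\<in>A. a \<le> a0}" using Suc.prems by auto
    ultimately show ?thesis by (metis One_nat_def Suc_leI card_gt_0_iff empty_iff)
  qed
  hence "card {b\<in>B. b \<le> a0} \<ge> 1" using Suc.prems(3) le_trans by blast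
  hence Bne: "{b\<in>B. b \<le> a0} \<noteq> {}" by (metis card.empty not_one_le_zero)
  define b0 where "b0 = Min B"
  have b0B: "b0 \<in> B" proof -
    have "B \<noteq> {}" using Bne by auto
    thus ?thesis using Suc.prems(2) b0_def Min_in by blast
  qed
  have b0min: "\<forall>b\<in>B. b0 \<le> b" using Suc.prems b0_def by auto
  have b0a0: "b0 \<le> a0" using Bne b0min by force
  define A' where "A' = A - {a0}"
  define B' where "B' = B - {b0}"
  have cA': "n = card A'" using Suc.hyps(2) a0A A'_def by simp
  have cond: "\<forall>y. card {a\<in>A'. a \<le> y} \<le> card {b\<in>B'. b \<le> y}"
  proof
    fix y
    show "card {a\<in>A'. a \<le> y} \<le> card {b\<in>B'. b \<le> y}"
    proof (cases "a0 \<le> y")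
      case True
      have e1: "{a\<in>A'. a \<le> y} = {a\<in>A. a \<le> y} - {a0}" using A'_def by auto
      have e2: "{b\<in>B'. b \<le> y} = {b\<in>B. b \<le> y} - {b0}" using B'_def by auto
      have "card {a\<in>A'. a \<le> y} = card {a\<in>A. a \<le> y} - 1"
        unfolding e1 using True a0A Suc.prems by (subst card_Diff_singleton) auto
      moreover have "card {b\<in>B'. b \<le> y} = card {b\<in>B. b \<le> y} - 1"
        unfolding e2 using True b0a0 b0B Suc.prems by (subst card_Diff_singleton) auto
      ultimately show ?thesis using Suc.prems(3) by (metis diff_le_mono)
    next
      case False
      hence "{a\<in>A'. a \<le> y} = {}" using a0min A'_def by auto
      then show ?thesis by (metis card.empty le0)
    qed
  qed
  obtain \<psi> where psi: "inj_on \<psi> A'" "\<psi> ` A' \<subseteq> B'" "\<forall>a\<in>A'. \<psi> a \<le> a"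
  proof -
    have "finite A'" "finite B'" using Suc.prems A'_def B'_def by auto
    thus ?thesis using Suc.hyps(1)[OF cA' _ _ cond] that by blast
  qed
  define \<phi> where "\<phi> = \<psi>(a0 := b0)"
  have "inj_on \<phi> A"
  proof -
    have "A = insert a0 A'" using A'_def a0A by auto
    moreover have "inj_on \<phi> A'" using psi(1) \<phi>_def A'_def by (simp add: inj_on_def)
    moreover have "\<phi> a0 \<notin> \<phi> ` A'" using psi(2) \<phi>_def A'_def B'_def by auto
    ultimately show ?thesis by auto
  qed
  moreover have "\<phi> ` A \<subseteq> B" using psi(2) \<phi>_def A'_def B'_def b0B by auto
  moreover have "\<forall>a\<in>A. \<phi> a \<le> a" using psi(3) \<phi>_def A'_def b0a0 by auto
  ultimately show ?case by blast
qed


lemma fin_le: "finite {n::nat. P n \<and> real n \<le> x}"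
proof (rule finite_subset)
  show "{n::nat. P n \<and> real n \<le> x} \<subseteq> {..nat \<lceil>x\<rceil>}"
  proof
    fix n assume "n \<in> {n::nat. P n \<and> real n \<le> x}"
    then have "real n \<le> x" by auto
    then have "real n \<le> real_of_int \<lceil>x\<rceil>" using le_of_int_ceiling order_trans by blast
    then have "int n \<le> \<lceil>x\<rceil>" by linarith
    then show "n \<in> {..nat \<lceil>x\<rceil>}" by auto
  qed
qed auto

lemma main_b:
  fixes Q1 Q2 :: "nat set" and h :: "nat \<Rightarrow> real" and x :: real
  assumes pp1: "\<forall>q\<in>Q1. primepow q"
    and pp2: "\<forall>q\<in>Q2. primepow q"
    and cop1: "\<forall>a\<in>Q1. \<forall>b\<in>Q1. a \<noteq> b \<longrightarrow> coprime a b"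
    and hnonneg: "\<forall>n>0. h n \<ge> 0"
    and hmono: "\<forall>m n. 0 < m \<longrightarrow> m \<le> n \<longrightarrow> h n \<le> h m"
    and cond: "\<forall>y\<le>x. count_upto Q2 y \<le> count_upto Q1 y"
  shows "Vsum h (gen_set Q2) x \<le> Vsum h (gen_set Q1) x"
proof -
  define A where "A = {q\<in>Q2. real q \<le> x}"
  define B where "B = {q\<in>Q1. real q \<le> x}"
  have finA: "finite A" unfolding A_def using fin_le by simp
  have finB: "finite B" unfolding B_def using fin_le by simp
  have "\<forall>y. card {a\<in>A. a \<le> y} \<le> card {b\<in>B. b \<le> y}"
  proof
    fix y :: nat
    have "{a\<in>A. a \<le> y} = {q\<in>Q2. real q \<le> min x (real y)}" unfolding A_def by auto
    moreover have "{b\<in>B. b \<le> y} = {q\<in>Q1. real q \<le> min x (real y)}" unfolding B_def by auto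
    ultimately show "card {a\<in>A. a \<le> y} \<le> card {b\<in>B. b \<le> y}"
      using cond[rule_format, of "min x (real y)"] unfolding count_upto_def by simp
  qed
  then obtain \<psi> where psi: "inj_on \<psi> A" "\<psi> ` A \<subseteq> B" "\<forall>a\<in>A. \<psi> a \<le> a"
    using match_lemma[OF finA finB] by blast
  define T1 where "T1 = {n \<in> gen_set Q1. real n \<le> x}"
  define T2 where "T2 = {n \<in> gen_set Q2. real n \<le> x}"
  define Mf where "Mf = (\<lambda>n. SOME M. set_mset M \<subseteq> Q2 \<and> prod_mset M = n)"
  define \<phi> where "\<phi> = (\<lambda>n. prod_mset (image_mset \<psi> (Mf n)))"
  have pos1: "\<forall>r\<in>Q1. r > 0" using pp1 primepow_gt_Suc_0 by force
  have pos2: "\<forall>r\<in>Q2. r > 0" using pp2 primepow_gt_Suc_0 by force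
  have Mf: "set_mset (Mf n) \<subseteq> Q2" "prod_mset (Mf n) = n" if "n \<in> T2" for n
  proof -
    have "\<exists>M. set_mset M \<subseteq> Q2 \<and> prod_mset M = n" using that unfolding T2_def gen_set_def by auto
    then have "set_mset (Mf n) \<subseteq> Q2 \<and> prod_mset (Mf n) = n" unfolding Mf_def by (rule someI_ex)
    then show "set_mset (Mf n) \<subseteq> Q2" "prod_mset (Mf n) = n" by auto
  qed
  have MfA: "set_mset (Mf n) \<subseteq> A" if "n \<in> T2" for n
  proof
    fix v assume v: "v \<in># Mf n"
    have n0: "n > 0" using Mf[OF that] pos2 by (metis gr0I prod_mset_zero_iff subsetD)
    have "v dvd n" using v Mf[OF that] by (metis dvd_prod_mset)
    then have "v \<le> n" using n0 by (simp add: dvd_imp_le)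
    then have "real v \<le> x" using that unfolding T2_def by auto
    then show "v \<in> A" using v Mf[OF that] unfolding A_def by auto
  qed
  have phiQ1: "set_mset (image_mset \<psi> (Mf n)) \<subseteq> Q1" if "n \<in> T2" for n
    using MfA[OF that] psi(2) unfolding B_def by auto
  have phi_le: "\<phi> n \<le> n" if "n \<in> T2" for n
    unfolding \<phi>_def using prod_image_le[of "Mf n" \<psi>] MfA[OF that] psi(3) Mf[OF that] by auto
  have phi_pos: "\<phi> n > 0" if "n \<in> T2" for n
    unfolding \<phi>_def using phiQ1[OF that] pos1 by (metis gr0I prod_mset_zero_iff subsetD)
  have phiT1: "\<phi> ` T2 \<subseteq> T1"
  proof
    fix m assume "m \<in> \<phi> ` T2"
    then obtain n where n: "n \<in> T2" "m = \<phi> n" by auto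
    have "\<exists>M. m = prod_mset M \<and> set_mset M \<subseteq> Q1"
      using phiQ1[OF n(1)] n(2) unfolding \<phi>_def by (intro exI[of _ "image_mset \<psi> (Mf n)"]) auto
    then have "m \<in> gen_set Q1" unfolding gen_set_def by auto
    moreover have "real m \<le> x" using phi_le[OF n(1)] n T2_def by auto
    ultimately show "m \<in> T1" unfolding T1_def by auto
  qed
  have inj: "inj_on \<phi> T2"
  proof (rule inj_onI)
    fix n n' assume nn: "n \<in> T2" "n' \<in> T2" "\<phi> n = \<phi> n'"
    have "image_mset \<psi> (Mf n) = image_mset \<psi> (Mf n')"
      using unique_fact[OF pp1 cop1 phiQ1[OF nn(1)] phiQ1[OF nn(2)]] nn(3) unfolding \<phi>_def by simp
    then have "image_mset (inv_into A \<psi>) (image_mset \<psi> (Mf n)) = image_mset (inv_into A \<psi>) (image_mset \<psi> (Mf n'))"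
      by simp
    moreover have "image_mset (inv_into A \<psi>) (image_mset \<psi> (Mf k)) = Mf k" if "k \<in> T2" for k
    proof -
      have "image_mset (inv_into A \<psi>) (image_mset \<psi> (Mf k)) = image_mset (\<lambda>v. inv_into A \<psi> (\<psi> v)) (Mf k)"
        by (simp add: multiset.map_comp o_def)
      also have "\<dots> = image_mset id (Mf k)"
        using MfA[OF that] psi(1) by (intro image_mset_cong) (auto simp: inv_into_f_f)
      finally show ?thesis by simp
    qed
    ultimately have "Mf n = Mf n'" using nn by simp
    then show "n = n'" using Mf nn by metis
  qed
  have "Vsum h (gen_set Q2) x = (\<Sum>n\<in>T2. h n)" unfolding Vsum_def T2_def by simp
  also have "\<dots> \<le> (\<Sum>n\<in>T2. h (\<phi> n))"
    using hmono phi_le phi_pos by (intro sum_mono) auto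
  also have "\<dots> = (\<Sum>m\<in>\<phi> ` T2. h m)" using inj by (simp add: sum.reindex)
  also have "\<dots> \<le> (\<Sum>m\<in>T1. h m)"
  proof (rule sum_mono2)
    show "finite T1" unfolding T1_def using fin_le by simp
    show "\<phi> ` T2 \<subseteq> T1" by (rule phiT1)
    fix b assume bT: "b \<in> T1 - \<phi> ` T2"
    show "0 \<le> h b"
    proof -
      from bT obtain M where "set_mset M \<subseteq> Q1" "b = prod_mset M" unfolding T1_def gen_set_def by auto
      then have "b > 0" using pos1 by (metis gr0I prod_mset_zero_iff subsetD)
      then show "0 \<le> h b" using hnonneg by auto
    qed
  qed
  also have "\<dots> = Vsum h (gen_set Q1) x" unfolding Vsum_def T1_def by simp
  finally show ?thesis .
qed

theorem lemma11:
  fixes Q1 Q2 :: "nat set" and h :: "nat \<Rightarrow> real"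
  assumes pp1: "\<forall>q\<in>Q1. primepow q"
    and pp2: "\<forall>q\<in>Q2. primepow q"
    and cop1: "\<forall>a\<in>Q1. \<forall>b\<in>Q1. a \<noteq> b \<longrightarrow> coprime a b"
    and cop2: "\<forall>a\<in>Q2. \<forall>b\<in>Q2. a \<noteq> b \<longrightarrow> coprime a b"
    and hnonneg: "\<forall>n>0. h n \<ge> 0"
    and hmono: "\<forall>m n. 0 < m \<longrightarrow> m \<le> n \<longrightarrow> h n \<le> h m"
  shows "((\<forall>x\<ge>0. count_upto Q1 x \<ge> count_upto Q2 x) \<longrightarrow>
            (\<forall>x\<ge>0. Vsum h (gen_set Q1) x \<ge> Vsum h (gen_set Q2) x))
       \<and> (\<forall>x0::real. (\<forall>x\<le>x0. count_upto Q1 x \<ge> count_upto Q2 x) \<longrightarrow>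
            (\<forall>x\<le>x0. Vsum h (gen_set Q1) x \<ge> Vsum h (gen_set Q2) x))"
proof (intro conjI impI allI)
  fix x :: real
  assume H: "\<forall>x\<ge>0. count_upto Q1 x \<ge> count_upto Q2 x" and "x \<ge> 0"
  have "\<forall>y\<le>x. count_upto Q2 y \<le> count_upto Q1 y"
  proof (intro allI impI)
    fix y :: real assume "y \<le> x"
    show "count_upto Q2 y \<le> count_upto Q1 y"
    proof (cases "y \<ge> 0")
      case True then show ?thesis using H by auto
    next
      case False
      then have "{q\<in>Q2. real q \<le> y} = {}" by auto
      then show ?thesis unfolding count_upto_def by (metis card.empty le0)
    qed
  qed
  then show "Vsum h (gen_set Q1) x \<ge> Vsum h (gen_set Q2) x"
    using main_b[OF pp1 pp2 cop1 hnonneg hmono] by blast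
next
  fix x0 x :: real
  assume H: "\<forall>x\<le>x0. count_upto Q1 x \<ge> count_upto Q2 x" and "x \<le> x0"
  then have "\<forall>y\<le>x. count_upto Q2 y \<le> count_upto Q1 y" by auto
  then show "Vsum h (gen_set Q1) x \<ge> Vsum h (gen_set Q2) x"
    using main_b[OF pp1 pp2 cop1 hnonneg hmono] by blast
qed

end
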